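(* Let $MPR_{lsd}\subset MPR$ be the subgroup spanned by the lsd permutation words (including the empty word). Then $MPR_{lsd}$ is a subcoalgebra of $(MPR,\mu)$, and the restriction $\pi''=\pi|_{MPR_{lsd}}:MPR_{lsd}\to QSymm$ is an isomorphism of coalgebras. Consequently $(\pi'')^{-1}:QSymm\to MPR_{lsd}\subset MPR$ is a coalgebra morphism with $\pi\circ(\pi'')^{-1}=\mathrm{id}_{QSymm}$, i.e. a coalgebra section of $\pi$.
   Context: A permutation word of length $n$ is a word $[s_1,\dots,s_n]$ over $\mathbf N$ in which each of $1,\dots,n$ occurs once; $S_n$ is the set of these. $\mathrm{desc}(\sigma)=\{i\in\{1,\dots,n-1\}:s_i>s_{i+1}\}$. $\sigma\in S_n$ is lsd if it is the lexicographically smallest element of $\{\tau\in S_n:\mathrm{desc}(\tau)=\mathrm{desc}(\sigma)\}$. For a word $\alpha$ over $\mathbf N$ without repeated letters, $\mathrm{st}(\alpha)$ relabels its letters by $1,\dots,\text{length}$ via the order-preserving bijection. $(MPR,m,\mu)$: free abelian group on all permutation words; $m([a_1,\dots,a_m]\otimes[b_1,\dots,b_n])=[a_1,\dots,a_m]\times_{sh}[m+b_1,\dots,m+b_n]$ (shuffle product); $\mu(\alpha)=\sum_{\alpha'*\alpha''=\alpha}\mathrm{st}(\alpha')\otimes\mathrm{st}(\alpha'')$ over all prefix/suffix cuts; counit $1$ on the empty word, $0$ elsewhere. A composition of $n$ is a word $[a_1,\dots,a_r]$ over $\mathbf N$ with sum $n$; for $D=\{d_1<\dots<d_{r-1}\}\subset\{1,\dots,n-1\}$,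 $\mathrm{comp}(D)=[d_1,d_2-d_1,\dots,n-d_{r-1}]$. $QSymm$ is the free abelian group on all compositions (words over $\mathbf N$, including the empty one), with comultiplication $\mu([a_1,\dots,a_m])=\sum_{i=0}^m[a_1,\dots,a_i]\otimes[a_{i+1},\dots,a_m]$, counit $1$ on the empty word and $0$ elsewhere (and the overlapping shuffle product as multiplication). For compositions, $\beta\ge\alpha$ means $\beta$ refines $\alpha$; $F_\alpha=\sum_{\beta\ge\alpha}\beta$; the $F_\alpha$ form a basis of $QSymm$. The map $\pi:(MPR,m,\mu)\to QSymm$, $\pi(\sigma)=F_{\mathrm{comp}(\mathrm{desc}(\sigma))}$, is a surjective Hopf algebra morphism (in particular a coalgebra morphism). *)

theory Defs
  imports Main
begin

definition perm_word :: "nat list \<Rightarrow> bool" where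
  "perm_word w \<longleftrightarrow> distinct w \<and> set w = {1..length w}"

text \<open>Descent set, positions 1-indexed: i in desc w iff s_i > s_(i+1).\<close>
definition desc :: "nat list \<Rightarrow> nat set" where
  "desc w = {i \<in> {1..<length w}. w ! (i - 1) > w ! i}"

definition lex_less :: "nat list \<Rightarrow> nat list \<Rightarrow> bool" where
  "lex_less u v \<longleftrightarrow> (u, v) \<in> lexord {(a, b). a < b}"

definition lsd :: "nat list \<Rightarrow> bool" where
  "lsd w \<longleftrightarrow> perm_word w \<and>
     (\<forall>t. perm_word t \<and> length t = length w \<and> desc t = desc w \<longrightarrow> w = t \<or> lex_less w t)"

definition st :: "nat list \<Rightarrow> nat list" where
  "st a = map (\<lambda>x. card {y \<in> set a. y \<le> x}) a"

definition composition :: "nat list \<Rightarrow> bool" where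
  "composition c \<longleftrightarrow> (\<forall>x \<in> set c. 0 < x)"

definition comp :: "nat \<Rightarrow> nat set \<Rightarrow> nat list" where
  "comp n D = (if n = 0 then [] else
     (let b = 0 # sorted_list_of_set D @ [n] in map (\<lambda>(x, y). y - x) (zip (butlast b) (tl b))))"

definition psums :: "nat list \<Rightarrow> nat set" where
  "psums c = {sum_list (take i c) | i. 0 < i \<and> i < length c}"

text \<open>refines b a : b refines a (written b \<ge> a in the paper).\<close>
definition refines :: "nat list \<Rightarrow> nat list \<Rightarrow> bool" where
  "refines b a \<longleftrightarrow> sum_list b = sum_list a \<and> psums a \<subseteq> psums b"

section \<open>Free abelian groups as finitely supported integer functions\<close>

definition supp :: "('a \<Rightarrow> int) \<Rightarrow> 'a set" where
  "supp x = {w. x w \<noteq> 0}"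

definition delta :: "'a \<Rightarrow> 'a \<Rightarrow> int" where
  "delta a = (\<lambda>w. if w = a then 1 else 0)"

definition lin :: "('a \<Rightarrow> 'b \<Rightarrow> int) \<Rightarrow> ('a \<Rightarrow> int) \<Rightarrow> 'b \<Rightarrow> int" where
  "lin F x = (\<lambda>v. \<Sum>w\<in>supp x. x w * F w v)"

text \<open>Tensor product of two group homomorphisms, applied to an element of the tensor
  square (a finitely supported function on pairs of basis elements).\<close>
definition tensor_map :: "(('a \<Rightarrow> int) \<Rightarrow> 'b \<Rightarrow> int) \<Rightarrow> (('a \<Rightarrow> int) \<Rightarrow> 'b \<Rightarrow> int)
    \<Rightarrow> ('a \<times> 'a \<Rightarrow> int) \<Rightarrow> 'b \<times> 'b \<Rightarrow> int" where
  "tensor_map g h t = (\<lambda>(u, v). \<Sum>ab\<in>supp t. t ab * g (delta (fst ab)) u * h (delta (snd ab)) v)"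

definition MPR :: "(nat list \<Rightarrow> int) set" where
  "MPR = {x. finite (supp x) \<and> supp x \<subseteq> {w. perm_word w}}"

definition MPR_lsd :: "(nat list \<Rightarrow> int) set" where
  "MPR_lsd = {x. finite (supp x) \<and> supp x \<subseteq> {w. lsd w}}"

definition QSymm :: "(nat list \<Rightarrow> int) set" where
  "QSymm = {x. finite (supp x) \<and> supp x \<subseteq> {c. composition c}}"

definition mu_MPR_basis :: "nat list \<Rightarrow> nat list \<times> nat list \<Rightarrow> int" where
  "mu_MPR_basis a = (\<lambda>(u, v). int (card {i \<in> {0..length a}. st (take i a) = u \<and> st (drop i a) = v}))"

definition mu_MPR :: "(nat list \<Rightarrow> int) \<Rightarrow> nat list \<times> nat list \<Rightarrow> int" where
  "mu_MPR = lin mu_MPR_basis"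

definition mu_Q_basis :: "nat list \<Rightarrow> nat list \<times> nat list \<Rightarrow> int" where
  "mu_Q_basis a = (\<lambda>(u, v). int (card {i \<in> {0..length a}. take i a = u \<and> drop i a = v}))"

definition mu_Q :: "(nat list \<Rightarrow> int) \<Rightarrow> nat list \<times> nat list \<Rightarrow> int" where
  "mu_Q = lin mu_Q_basis"

definition counit :: "(nat list \<Rightarrow> int) \<Rightarrow> int" where
  "counit x = x []"

definition F :: "nat list \<Rightarrow> nat list \<Rightarrow> int" where
  "F a = (\<lambda>b. if composition b \<and> refines b a then 1 else 0)"

definition pi_map :: "(nat list \<Rightarrow> int) \<Rightarrow> nat list \<Rightarrow> int" where
  "pi_map = lin (\<lambda>s. F (comp (length s) (desc s)))"

definition coalg_morphism :: "(nat list \<Rightarrow> int) set \<Rightarrow> ((nat list \<Rightarrow> int) \<Rightarrow> nat list \<times> nat list \<Rightarrow> int)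
    \<Rightarrow> ((nat list \<Rightarrow> int) \<Rightarrow> nat list \<times> nat list \<Rightarrow> int)
    \<Rightarrow> ((nat list \<Rightarrow> int) \<Rightarrow> nat list \<Rightarrow> int) \<Rightarrow> bool" where
  "coalg_morphism A muA muB g \<longleftrightarrow>
     (\<forall>x\<in>A. \<forall>y\<in>A. g (\<lambda>w. x w + y w) = (\<lambda>w. g x w + g y w)) \<and>
     (\<forall>x\<in>A. muB (g x) = tensor_map g g (muA x)) \<and>
     (\<forall>x\<in>A. counit (g x) = counit x)"

end

theory Submission
  imports Defs
begin

fun dif :: "nat \<Rightarrow> nat list \<Rightarrow> nat list" where
  "dif a [] = []" | "dif a (y # r) = (y - a) # dif y r"

lemma dif_eq: "map (\<lambda>(x, y). y - x) (zip (butlast (a # xs)) xs) = dif a xs"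
  proof (induction xs arbitrary: a)
  case (Cons y r) then show ?case by (cases r) auto
qed simp

lemma psums_Cons: "psums (x # r) = (if r = [] then {} else insert x ((+) x ` psums r))"
proof (cases "r = []")
  case True then show ?thesis by (auto simp: psums_def)
next
  case False
  have "psums (x # r) = {sum_list (take i (x # r)) | i. 0 < i \<and> i < Suc (length r)}"
    by (simp add: psums_def)
  also have "\<dots> = insert x ((+) x ` psums r)"
  proof (rule set_eqI, rule iffI)
    fix z assume "z \<in> {sum_list (take i (x # r)) | i. 0 < i \<and> i < Suc (length r)}"
    then obtain i where i: "0 < i" "i < Suc (length r)" "z = sum_list (take i (x # r))" by blast
    show "z \<in> insert x ((+) x ` psums r)"
    proof (cases "i = 1")
      case True then show ?thesis using i by simp
    next
      case False
      then obtain j where j: "i = Suc j" "0 < j" using i by (cases i) auto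
      then have "z = x + sum_list (take j r)" using i by simp
      moreover have "sum_list (take j r) \<in> psums r" using i j unfolding psums_def by auto
      ultimately show ?thesis by blast
    qed
  next
    fix z assume "z \<in> insert x ((+) x ` psums r)"
    then consider "z = x" | j where "0 < j" "j < length r" "z = x + sum_list (take j r)"
      unfolding psums_def by blast
    then show "z \<in> {sum_list (take i (x # r)) | i. 0 < i \<and> i < Suc (length r)}"
    proof cases
      case 1 then show ?thesis using False
        by (intro CollectI exI[of _ 1]) auto
    next
      case 2 then show ?thesis by (intro CollectI exI[of _ "Suc j"]) auto
    qed
  qed
  finally show ?thesis using False by simp
qed

lemma psums_Nil[simp]: "psums [] = {}" by (simp add: psums_def)

lemma dif_props:
  assumes "sorted_wrt (<) (a # xs)" "xs \<noteq> []"
  shows "sum_list (dif a xs) = last xs - a \<and> (\<forall>x\<in>set (dif a xs). 0 < x)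
     \<and> psums (dif a xs) = (\<lambda>z. z - a) ` set (butlast xs)"
  using assms
proof (induction xs arbitrary: a)
  case Nil then show ?case by simp
next
  case (Cons y r)
  show ?case
  proof (cases "r = []")
    case True then show ?thesis using Cons.prems by (simp add: psums_Cons)
  next
    case False
    have s: "sorted_wrt (<) (y # r)" using Cons.prems by simp
    note IH = Cons.IH[OF s False]
    have ay: "a < y" using Cons.prems by simp
    have yr: "\<forall>z\<in>set r. y < z" using Cons.prems by simp
    have "last r > y" using yr False by simp
    then have 1: "sum_list (dif a (y # r)) = last (y # r) - a" using IH ay False by simp
    have 2: "\<forall>x\<in>set (dif a (y # r)). 0 < x" using IH ay by simp
    have "psums (dif a (y # r)) = insert (y - a) ((+) (y - a) ` ((\<lambda>z. z - y) ` set (butlast r)))"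
      using IH False by (simp add: psums_Cons) (cases r, auto)
    also have "\<dots> = (\<lambda>z. z - a) ` set (butlast (y # r))"
    proof -
      have "\<forall>z\<in>set (butlast r). y < z" using yr by (meson in_set_butlastD)
      then have "(+) (y - a) ` ((\<lambda>z. z - y) ` set (butlast r)) = (\<lambda>z. z - a) ` set (butlast r)"
        using ay by (force simp: image_image intro!: image_cong)
      then show ?thesis using False by simp
    qed
    finally show ?thesis using 1 2 by blast
  qed
qed

lemma comp_props:
  assumes "D \<subseteq> {1..<n}"
  shows "sum_list (comp n D) = n \<and> composition (comp n D) \<and> psums (comp n D) = D"
proof (cases "n = 0")
  case True then show ?thesis using assms by (simp add: comp_def composition_def)
next
  case False
  have fin: "finite D" using assms finite_subset by blast
  let ?L = "sorted_list_of_set D"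
  have eq: "comp n D = dif 0 (?L @ [n])"
    using False by (simp add: comp_def Let_def dif_eq[symmetric])
  have "sorted_wrt (<) (0 # ?L @ [n])"
    using assms fin False by (auto simp: sorted_wrt_append)
  from dif_props[OF this] show ?thesis using eq fin by (simp add: composition_def)
qed

lemma desc_sub: "desc x \<subseteq> {1..<length x}" by (auto simp: desc_def)

definition Fd :: "nat list \<Rightarrow> nat list \<Rightarrow> int" where
  "Fd x b = (if composition b \<and> sum_list b = length x \<and> desc x \<subseteq> psums b then 1 else 0)"

lemma F_comp: "D \<subseteq> {1..<n} \<Longrightarrow> F (comp n D) = (\<lambda>b. if composition b \<and> sum_list b = n \<and> D \<subseteq> psums b then 1 else 0)"
  using comp_props[of D n] by (auto simp: F_def refines_def)

lemma F_desc: "F (comp (length x) (desc x)) = Fd x"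
  using F_comp[OF desc_sub[of x]] by (simp add: Fd_def fun_eq_iff)



lemma st_length[simp]: "length (st x) = length x" by (simp add: st_def)
lemma st_nth: "p < length x \<Longrightarrow> st x ! p = card {y \<in> set x. y \<le> x ! p}" by (simp add: st_def)

lemma st_less: assumes "p < length x" "q < length x"
  shows "st x ! p < st x ! q \<longleftrightarrow> x ! p < x ! q"
proof
  assume "x ! p < x ! q"
  then have "{y \<in> set x. y \<le> x ! p} \<subset> {y \<in> set x. y \<le> x ! q}" using assms by force
  then show "st x ! p < st x ! q" using assms by (simp add: st_nth psubset_card_mono)
next
  assume a: "st x ! p < st x ! q"
  show "x ! p < x ! q"
  proof (rule ccontr)
    assume "\<not> x ! p < x ! q"
    then have "{y \<in> set x. y \<le> x ! q} \<subseteq> {y \<in> set x. y \<le> x ! p}" by auto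
    then have "st x ! q \<le> st x ! p" using assms by (simp add: st_nth card_mono)
    then show False using a by simp
  qed
qed

lemma desc_st[simp]: "desc (st x) = desc x"
  unfolding desc_def by (auto simp: st_less)

lemma st_perm: assumes "distinct x" shows "perm_word (st x)"
proof -
  let ?n = "length x"
  have rng: "st x ! p \<in> {1..?n}" if "p < ?n" for p
  proof -
    have "x ! p \<in> {y \<in> set x. y \<le> x ! p}" using that by simp
    then have "card {y \<in> set x. y \<le> x ! p} \<ge> 1"
      using card_gt_0_iff[of "{y \<in> set x. y \<le> x ! p}"] by fastforce
    moreover have "card {y \<in> set x. y \<le> x ! p} \<le> ?n"
    proof -
      have "card {y \<in> set x. y \<le> x ! p} \<le> card (set x)" by (rule card_mono) auto
      then show ?thesis using card_length[of x] by linarith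
    qed
    ultimately show ?thesis using that by (simp add: st_nth)
  qed
  have dist: "distinct (st x)"
  proof (subst distinct_conv_nth, intro allI impI)
    fix i j assume "i < length (st x)" "j < length (st x)" "i \<noteq> j"
    then have "x ! i \<noteq> x ! j" using assms by (simp add: nth_eq_iff_index_eq)
    then show "st x ! i \<noteq> st x ! j" using \<open>i < _\<close> \<open>j < _\<close>
      by (metis linorder_neq_iff st_length st_less order_less_irrefl)
  qed
  have sub: "set (st x) \<subseteq> {1..?n}" using rng by (auto simp: in_set_conv_nth)
  have "card (set (st x)) = ?n" using dist distinct_card by fastforce
  then have "set (st x) = {1..?n}" using sub by (simp add: card_subset_eq)
  then show ?thesis using dist by (simp add: perm_word_def)
qed

lemma desc_take: "desc (take i w) = {d \<in> desc w. d < i}"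
  unfolding desc_def by auto

lemma desc_drop: "desc (drop i w) = {d. 0 < d \<and> d + i \<in> desc w}"
  unfolding desc_def by (auto simp: add.commute)

definition Qp :: "nat list \<Rightarrow> bool" where
  "Qp w \<longleftrightarrow> (\<forall>k p q. 0 < k \<and> k < length w \<and> k \<notin> desc w \<and> p < k \<and> k \<le> q \<and> q < length w \<longrightarrow> w ! p < w ! q)"

lemma Qp_st[simp]: "Qp (st x) = Qp x"
  unfolding Qp_def by (auto simp: st_less)

lemma Qp_take: "Qp w \<Longrightarrow> Qp (take i w)"
  unfolding Qp_def desc_take by auto

lemma Qp_drop: assumes "Qp w" shows "Qp (drop i w)"
  unfolding Qp_def
proof (intro allI impI)
  fix k p q assume h: "0 < k \<and> k < length (drop i w) \<and> k \<notin> desc (drop i w) \<and> p < k \<and> k \<le> q \<and> q < length (drop i w)"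
  then have "k + i \<notin> desc w" by (auto simp: desc_drop)
  then have "w ! (i + p) < w ! (i + q)" using assms h unfolding Qp_def
  proof -
    have "0 < k + i" "k + i < length w" "p + i < k + i" "k + i \<le> q + i" "q + i < length w" using h by auto
    then have "w ! (p + i) < w ! (q + i)" using assms \<open>k + i \<notin> desc w\<close> unfolding Qp_def by blast
    then show ?thesis by (simp add: add.commute)
  qed
  moreover have "i \<le> length w" using h by auto
  ultimately show "drop i w ! p < drop i w ! q" by simp
qed



lemma lex_asym: "lex_less u v \<Longrightarrow> \<not> lex_less v u"
  unfolding lex_less_def by (rule lexord_asymmetric) (auto simp: asym_on_def)

lemma lex_total: "lex_less u v \<or> u = v \<or> lex_less v u"
  unfolding lex_less_def by (rule lexord_linear) auto

lemma lsd_unique: "lsd w \<Longrightarrow> lsd w' \<Longrightarrow> length w = length w' \<Longrightarrow> desc w = desc w' \<Longrightarrow> w = w'"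
  unfolding lsd_def using lex_asym by metis

lemma perm_distinct: "perm_word w \<Longrightarrow> distinct w" by (simp add: perm_word_def)

lemma Qp_lsd: assumes pw: "perm_word w" and Q: "Qp w" shows "lsd w"
  unfolding lsd_def
proof (intro conjI allI impI pw)
  fix t assume ht: "perm_word t \<and> length t = length w \<and> desc t = desc w"
  let ?n = "length w"
  show "w = t \<or> lex_less w t"
  proof (rule ccontr)
    assume "\<not> (w = t \<or> lex_less w t)"
    then have "lex_less t w" using lex_total by blast
    then obtain j where j: "j < ?n" "take j t = take j w" "t ! j < w ! j"
      using ht unfolding lex_less_def lexord_take_index_conv by auto
    define B where "B = {k. j < k \<and> (k = ?n \<or> k \<notin> desc w)}"
    define b where "b = Least (\<lambda>k. k \<in> B)"
    have "?n \<in> B" using j by (simp add: B_def)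
    then have bB: "b \<in> B" and bn: "b \<le> ?n" unfolding b_def by (auto intro: LeastI Least_le)
    have jb: "j < b" using bB by (simp add: B_def)
    have indesc: "k \<in> desc w" if "j < k" "k < b" for k
    proof -
      have "k \<notin> B" using that unfolding b_def using not_less_Least by blast
      then show ?thesis using that bn by (simp add: B_def)
    qed
    have tdec: "t ! (k - 1) > t ! k" if "j < k" "k < b" for k
    proof -
      have "k \<in> desc t" using indesc[OF that] ht by simp
      then show ?thesis by (simp add: desc_def)
    qed
    have tle: "t ! p \<le> t ! j" if "j \<le> p" "p < b" for p
      using that
    proof (induction p)
      case 0 then show ?case by simp
    next
      case (Suc p)
      show ?case
      proof (cases "j = Suc p")
        case True then show ?thesis by simp
      next
        case False
        then have "t ! Suc p < t ! p" using tdec[of "Suc p"] Suc.prems by simp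
        then show ?thesis using Suc False by simp
      qed
    qed
    have distt: "distinct t" using ht perm_distinct by blast
    have setw: "set t = set w" using ht pw by (simp add: perm_word_def)
    have sub: "(\<lambda>p. t ! p) ` {j..<b} \<subseteq> (\<lambda>q. w ! q) ` {j<..<b}"
    proof
      fix v assume "v \<in> (\<lambda>p. t ! p) ` {j..<b}"
      then obtain p where p: "j \<le> p" "p < b" "v = t ! p" by auto
      have vlt: "v < w ! j" using tle[OF p(1,2)] j p by simp
      have "v \<in> set w" using p bn ht setw by (metis nth_mem order_less_le_trans)
      then obtain q where q: "q < ?n" "v = w ! q" by (auto simp: in_set_conv_nth)
      have "q \<ge> j"
      proof (rule ccontr)
        assume "\<not> q \<ge> j"
        then have "w ! q = t ! q" using j(2) by (metis linorder_not_le nth_take)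
        then have "t ! q = t ! p" using p q by simp
        moreover have "q \<noteq> p" "q < length t" "p < length t" using \<open>\<not> q \<ge> j\<close> p q ht bn by auto
        ultimately show False using distt by (simp add: nth_eq_iff_index_eq)
      qed
      moreover have "q \<noteq> j" using vlt q by auto
      moreover have "q < b"
      proof (rule ccontr)
        assume "\<not> q < b"
        then have "b < ?n" "b \<notin> desc w" using q bB by (auto simp: B_def)
        then have "w ! j < w ! q" using Q \<open>\<not> q < b\<close> jb q unfolding Qp_def
          by (metis gr_zeroI not_less_zero not_le)
        then show False using vlt q by simp
      qed
      ultimately show "v \<in> (\<lambda>q. w ! q) ` {j<..<b}" using q by auto
    qed
    have "inj_on (\<lambda>p. t ! p) {j..<b}"
      using distt ht bn by (auto simp: inj_on_def nth_eq_iff_index_eq)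
    then have "card ((\<lambda>p. t ! p) ` {j..<b}) = b - j" by (simp add: card_image)
    moreover have "card ((\<lambda>q. w ! q) ` {j<..<b}) \<le> b - j - 1"
      using card_image_le[of "{j<..<b}" "\<lambda>q. w ! q"] by simp
    ultimately show False using card_mono[OF _ sub] jb by fastforce
  qed
qed



lemma Qp_exists:
  assumes D: "D \<subseteq> {1..<n}"
  shows "\<exists>w. perm_word w \<and> length w = n \<and> desc w = D \<and> Qp w"
proof -
  define C where "C = insert 0 (insert n ({1..<n} - D))"
  have finC: "finite C" by (simp add: C_def)
  define av where "av p = Max {c\<in>C. c \<le> p}" for p
  define bv where "bv p = Min {c\<in>C. p < c}" for p
  define v where "v p = av p + bv p - p" for p
  have a1: "av p \<in> C \<and> av p \<le> p" for p
  proof -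
    have "0 \<in> {c\<in>C. c \<le> p}" by (simp add: C_def)
    then have "av p \<in> {c\<in>C. c \<le> p}" unfolding av_def using finC by (intro Max_in) auto
    then show ?thesis by simp
  qed
  have a2: "c \<le> av p" if "c \<in> C" "c \<le> p" for c p
    unfolding av_def using finC that by (intro Max_ge) auto
  have b1: "bv p \<in> C \<and> p < bv p" if "p < n" for p
  proof -
    have "n \<in> {c\<in>C. p < c}" using that by (simp add: C_def)
    then have "bv p \<in> {c\<in>C. p < c}" unfolding bv_def using finC by (intro Min_in) auto
    then show ?thesis by simp
  qed
  have b2: "bv p \<le> c" if "c \<in> C" "p < c" for c p
    unfolding bv_def using finC that by (intro Min_le) auto
  have Cn: "c \<le> n" if "c \<in> C" for c using that by (auto simp: C_def)
  have vr: "av p < v p \<and> v p \<le> bv p" if "p < n" for p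
    using a1[of p] b1[OF that] unfolding v_def by linarith
  have cut: "v p < v q" if "p < q" "q < n" "c \<in> C" "p < c" "c \<le> q" for p q c
  proof -
    have "bv p \<le> c" using b2 that by blast
    moreover have "c \<le> av q" using a2 that by blast
    ultimately show ?thesis using vr[of p] vr[of q] that by simp
  qed
  have nocut: "v q < v p" if "p < q" "q < n" "\<forall>c\<in>C. \<not> (p < c \<and> c \<le> q)" for p q
  proof -
    have "av q = av p"
    proof (rule antisym)
      show "av q \<le> av p" using a1[of q] a2[of "av q" p] that by (meson not_le)
      show "av p \<le> av q" using a1[of p] a2[of "av p" q] that by simp
    qed
    moreover have "bv q = bv p"
    proof (rule antisym)
      show "bv q \<le> bv p" using b1[of p] b2[of "bv p" q] that by (meson not_le less_trans)
      show "bv p \<le> bv q" using b1[of q] b2[of "bv q" p] that by simp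
    qed
    ultimately show ?thesis using that vr[of q] b1[of q] a1[of p] unfolding v_def by linarith
  qed
  define w where "w = map v [0..<n]"
  have lw: "length w = n" by (simp add: w_def)
  have wn: "w ! p = v p" if "p < n" for p using that by (simp add: w_def)
  have mono_or: "v p < v q \<or> v q < v p" if "p < q" "q < n" for p q
    using cut nocut that by blast
  have dist: "distinct w"
    unfolding distinct_conv_nth lw
    by (metis wn linorder_neq_iff mono_or order_less_irrefl)
  have sub: "set w \<subseteq> {1..n}"
  proof
    fix x assume "x \<in> set w"
    then obtain p where "p < n" "x = v p" by (auto simp: w_def)
    then show "x \<in> {1..n}" using vr[of p] b1[of p] Cn by fastforce
  qed
  have "card (set w) = n" using dist lw distinct_card by fastforce
  then have "set w = {1..n}" using sub by (simp add: card_subset_eq)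
  then have pw: "perm_word w" using dist lw by (simp add: perm_word_def)
  have dw: "desc w = D"
  proof (rule set_eqI)
    fix k
    show "k \<in> desc w \<longleftrightarrow> k \<in> D"
    proof (cases "1 \<le> k \<and> k < n")
      case False then show ?thesis using D lw by (auto simp: desc_def)
    next
      case True
      then have "k \<in> desc w \<longleftrightarrow> v k < v (k - 1)" using wn[of k] wn[of "k - 1"] lw by (auto simp: desc_def)
      also have "\<dots> \<longleftrightarrow> k \<notin> C"
      proof
        assume "v k < v (k - 1)"
        then show "k \<notin> C" using cut[of "k - 1" k k] True by auto
      next
        assume "k \<notin> C"
        then have "\<forall>c\<in>C. \<not> (k - 1 < c \<and> c \<le> k)" by (metis Suc_pred' True le_antisym not_less_eq_eq less_one not_le)
        then show "v k < v (k - 1)" using nocut[of "k - 1" k] True by auto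
      qed
      also have "\<dots> \<longleftrightarrow> k \<in> D" using True by (auto simp: C_def)
      finally show ?thesis .
    qed
  qed
  have "Qp w"
    unfolding Qp_def
  proof (intro allI impI)
    fix k p q assume h: "0 < k \<and> k < length w \<and> k \<notin> desc w \<and> p < k \<and> k \<le> q \<and> q < length w"
    then have "k \<in> C" using dw lw by (auto simp: C_def)
    then have "v p < v q" using cut[of p q k] h lw by auto
    then show "w ! p < w ! q" using h lw wn by auto
  qed
  then show ?thesis using pw lw dw by blast
qed

lemma lsd_Qp: assumes "lsd w" shows "Qp w"
proof -
  obtain w' where w': "perm_word w'" "length w' = length w" "desc w' = desc w" "Qp w'"
    using Qp_exists[OF desc_sub[of w]] by blast
  have "lsd w'" using Qp_lsd w' by blast
  then have "w' = w" using lsd_unique assms w' by blast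
  then show ?thesis using w' by simp
qed

lemma lsd_iff: "lsd w \<longleftrightarrow> perm_word w \<and> Qp w"
  using lsd_Qp Qp_lsd lsd_def by blast

lemma lsd_exists: "D \<subseteq> {1..<n} \<Longrightarrow> \<exists>w. lsd w \<and> length w = n \<and> desc w = D"
  using Qp_exists Qp_lsd by blast

lemma lsd_take: "lsd w \<Longrightarrow> lsd (st (take i w))"
  by (simp add: lsd_iff Qp_take st_perm perm_distinct)

lemma lsd_drop: "lsd w \<Longrightarrow> lsd (st (drop i w))"
  by (simp add: lsd_iff Qp_drop st_perm perm_distinct)



lemma sum_supp: "finite T \<Longrightarrow> supp f \<subseteq> T \<Longrightarrow> (\<Sum>w\<in>supp f. f w * g w) = (\<Sum>w\<in>T. f w * g w)"
  by (rule sum.mono_neutral_left) (auto simp: supp_def)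

lemma lin_T: "finite T \<Longrightarrow> supp x \<subseteq> T \<Longrightarrow> lin G x v = (\<Sum>w\<in>T. x w * G w v)"
  unfolding lin_def by (rule sum_supp)

lemma supp_delta[simp]: "supp (delta a) = {a}" by (simp add: supp_def delta_def)

lemma lin_delta: "lin G (delta a) = G a"
  unfolding lin_def supp_delta by (simp add: delta_def)

lemma pi_eq: "pi_map = lin Fd"
  unfolding pi_map_def using F_desc by presburger

lemma pi_delta: "pi_map (delta a) = Fd a" by (simp add: pi_eq lin_delta)

lemma length_le_sum: "\<forall>x\<in>set b. 0 < x \<Longrightarrow> length b \<le> sum_list b"
  by (induction b) auto

lemma finite_comps: "finite {b. composition b \<and> sum_list b = n}"
proof -
  have "{b. composition b \<and> sum_list b = n} \<subseteq> {xs. set xs \<subseteq> {0..n} \<and> length xs \<le> n}"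
    using length_le_sum member_le_sum_list unfolding composition_def by fastforce
  then show ?thesis using finite_subset finite_lists_length_le[of "{0..n}"] by blast
qed

lemma supp_Fd: "supp (Fd x) \<subseteq> {b. composition b \<and> sum_list b = length x}"
  by (auto simp: supp_def Fd_def split: if_splits)

lemma finite_supp_Fd: "finite (supp (Fd x))"
  using finite_subset[OF supp_Fd finite_comps] .

lemma supp_lin: "supp (lin G x) \<subseteq> (\<Union>w\<in>supp x. supp (G w))"
proof
  fix v assume "v \<in> supp (lin G x)"
  then have "(\<Sum>w\<in>supp x. x w * G w v) \<noteq> 0" by (simp add: supp_def lin_def)
  then obtain w where "w \<in> supp x" "x w * G w v \<noteq> 0" using sum.not_neutral_contains_not_neutral by blast
  then show "v \<in> (\<Union>w\<in>supp x. supp (G w))" by (auto simp: supp_def)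
qed

lemma finite_supp_lin: "finite (supp x) \<Longrightarrow> (\<And>w. finite (supp (G w))) \<Longrightarrow> finite (supp (lin G x))"
  using supp_lin finite_subset by (metis (no_types, lifting) finite_UN_I)

lemma finite_supp_pi: "finite (supp x) \<Longrightarrow> finite (supp (pi_map x))"
  unfolding pi_eq using finite_supp_lin finite_supp_Fd by blast

lemma lin_add: assumes "finite (supp x)" "finite (supp y)"
  shows "lin G (\<lambda>w. x w + y w) = (\<lambda>v. lin G x v + lin G y v)"
proof
  fix v
  let ?T = "supp x \<union> supp y"
  have f: "finite ?T" using assms by simp
  have "supp (\<lambda>w. x w + y w) \<subseteq> ?T" by (auto simp: supp_def)
  then show "lin G (\<lambda>w. x w + y w) v = lin G x v + lin G y v"
    using f by (simp add: lin_T[OF f] distrib_right sum.distrib)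
qed

lemma lin_comb: assumes "finite I" "\<And>i. i \<in> I \<Longrightarrow> finite (supp (X i))"
  shows "lin G (\<lambda>z. \<Sum>i\<in>I. c i * X i z) = (\<lambda>v. \<Sum>i\<in>I. c i * lin G (X i) v)"
proof
  fix v
  let ?T = "\<Union>i\<in>I. supp (X i)"
  have f: "finite ?T" using assms by simp
  have s: "supp (\<lambda>z. \<Sum>i\<in>I. c i * X i z) \<subseteq> ?T"
    by (auto simp: supp_def intro: ccontr)
  have "lin G (\<lambda>z. \<Sum>i\<in>I. c i * X i z) v = (\<Sum>w\<in>?T. (\<Sum>i\<in>I. c i * X i w) * G w v)"
    by (rule lin_T[OF f s])
  also have "\<dots> = (\<Sum>i\<in>I. c i * (\<Sum>w\<in>?T. X i w * G w v))"
    by (simp add: sum_distrib_left sum_distrib_right mult.assoc) (rule sum.swap)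
  also have "\<dots> = (\<Sum>i\<in>I. c i * lin G (X i) v)"
    by (rule sum.cong[OF refl]) (subst lin_T[OF f], auto)
  finally show "lin G (\<lambda>z. \<Sum>i\<in>I. c i * X i z) v = (\<Sum>i\<in>I. c i * lin G (X i) v)" .
qed

lemma supp_comb: "supp (\<lambda>z. \<Sum>i\<in>I. c i * X i z) \<subseteq> (\<Union>i\<in>I. supp (X i))"
  by (auto simp: supp_def intro: ccontr)



lemma mu_Q_basis_eq: "mu_Q_basis b (u, v) = (if b = u @ v then 1 else 0)"
proof (cases "b = u @ v")
  case True
  have "i = length u" if "i \<le> length b" "take i b = u" for i
  proof -
    have "length (take i b) = i" using that(1) by simp
    then show ?thesis using that(2) by simp
  qed
  then have "{i \<in> {0..length b}. take i b = u \<and> drop i b = v} = {length u}" using True by auto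
  then show ?thesis using True by (simp add: mu_Q_basis_def)
next
  case False
  then have "{i \<in> {0..length b}. take i b = u \<and> drop i b = v} = {}"
    by auto
  then show ?thesis using False by (simp add: mu_Q_basis_def)
qed

lemma mu_Q_eval: assumes "finite (supp y)" shows "mu_Q y (u, v) = y (u @ v)"
proof -
  have "mu_Q y (u, v) = (\<Sum>b\<in>supp y. y b * (if b = u @ v then 1 else 0))"
    by (simp add: mu_Q_def lin_def mu_Q_basis_eq)
  also have "\<dots> = (\<Sum>b\<in>supp y. if b = u @ v then y b else 0)" by (rule sum.cong) auto
  also have "\<dots> = y (u @ v)" using assms by (simp add: supp_def)
  finally show ?thesis .
qed

lemma supp_mu_basis: "supp (mu_MPR_basis w) \<subseteq> (\<lambda>i. (st (take i w), st (drop i w))) ` {0..length w}"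
  by (auto simp: supp_def mu_MPR_basis_def)

lemma finite_supp_mu_basis: "finite (supp (mu_MPR_basis w))"
  using finite_subset[OF supp_mu_basis] by blast

lemma mu_basis_sum:
  assumes T: "finite T" "supp (mu_MPR_basis w) \<subseteq> T"
  shows "(\<Sum>ab\<in>T. mu_MPR_basis w ab * G ab) = (\<Sum>i\<in>{0..length w}. G (st (take i w), st (drop i w)))"
proof -
  define f where "f i = (st (take i w), st (drop i w))" for i
  let ?I = "{0..length w}"
  have mb: "mu_MPR_basis w ab = int (card {i \<in> ?I. f i = ab})" for ab
    by (cases ab) (simp add: mu_MPR_basis_def f_def)
  have "(\<Sum>ab\<in>T. mu_MPR_basis w ab * G ab) = (\<Sum>ab\<in>supp (mu_MPR_basis w). mu_MPR_basis w ab * G ab)"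
    using sum_supp[OF T] by simp
  also have "\<dots> = (\<Sum>ab\<in>f ` ?I. mu_MPR_basis w ab * G ab)"
    using sum_supp[OF _ supp_mu_basis, of w G] by (simp add: f_def)
  also have "\<dots> = (\<Sum>ab\<in>f ` ?I. (\<Sum>i\<in>{i \<in> ?I. f i = ab}. G (f i)))"
    by (rule sum.cong[OF refl]) (simp add: mb)
  also have "\<dots> = (\<Sum>i\<in>?I. G (f i))"
    by (rule sum.image_gen[symmetric]) simp
  finally show ?thesis by (simp add: f_def)
qed

lemma psums_append: "psums (u @ v) = psums u \<union> (if u \<noteq> [] \<and> v \<noteq> [] then {sum_list u} else {}) \<union> (+) (sum_list u) ` psums v"
proof (induction u)
  case Nil then show ?case by simp
next
  case (Cons x r)
  show ?case
  proof (cases "r = []")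
    case True then show ?thesis by (simp add: psums_Cons)
  next
    case False
    then show ?thesis using Cons by (auto simp: psums_Cons image_Un image_image add.assoc)
  qed
qed

lemma psums_bound: "composition u \<Longrightarrow> x \<in> psums u \<Longrightarrow> 0 < x \<and> x < sum_list u"
proof (induction u arbitrary: x)
  case Nil then show ?case by simp
next
  case (Cons y r)
  have "0 < y" "composition r" using Cons.prems by (auto simp: composition_def)
  then show ?case using Cons by (auto simp: psums_Cons split: if_splits)
    (metis composition_def list.set_sel(1) member_le_sum_list less_le_trans not_le zero_less_iff_neq_zero sum_list_eq_0_iff)
qed



lemma comp_append: "composition (u @ v) \<longleftrightarrow> composition u \<and> composition v"
  by (auto simp: composition_def)

lemma desc_part:
  assumes cu: "composition u" and cv: "composition v" and su: "sum_list u = k"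
    and sv: "sum_list v = length w - k" and kn: "k \<le> length w"
  shows "desc w \<subseteq> psums (u @ v) \<longleftrightarrow> desc (take k w) \<subseteq> psums u \<and> desc (drop k w) \<subseteq> psums v"
proof
  assume h: "desc w \<subseteq> psums (u @ v)"
  have 1: "desc (take k w) \<subseteq> psums u"
  proof
    fix d assume "d \<in> desc (take k w)"
    then have "d \<in> desc w" "d < k" by (auto simp: desc_take)
    then have "d \<in> psums (u @ v)" using h by blast
    then show "d \<in> psums u" using \<open>d < k\<close> su by (auto simp: psums_append split: if_splits)
  qed
  have 2: "desc (drop k w) \<subseteq> psums v"
  proof
    fix d assume "d \<in> desc (drop k w)"
    then have "d + k \<in> desc w" "0 < d" by (auto simp: desc_drop)
    then have "d + k \<in> psums (u @ v)" using h by blast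
    moreover have "d + k \<notin> psums u" using psums_bound[OF cu] su by fastforce
    ultimately show "d \<in> psums v" using \<open>0 < d\<close> su by (auto simp: psums_append add.commute split: if_splits)
  qed
  show "desc (take k w) \<subseteq> psums u \<and> desc (drop k w) \<subseteq> psums v" using 1 2 by blast
next
  assume h: "desc (take k w) \<subseteq> psums u \<and> desc (drop k w) \<subseteq> psums v"
  show "desc w \<subseteq> psums (u @ v)"
  proof
    fix d assume d: "d \<in> desc w"
    then have dn: "0 < d" "d < length w" using desc_sub[of w] by auto
    consider "d < k" | "d = k" | "k < d" by linarith
    then show "d \<in> psums (u @ v)"
    proof cases
      case 1
      then have "d \<in> psums u" using h d by (auto simp: desc_take)
      then show ?thesis by (simp add: psums_append)
    next
      case 2
      then have "u \<noteq> []" "v \<noteq> []" using su sv dn by auto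
      then show ?thesis using 2 su by (simp add: psums_append)
    next
      case 3
      then have "d - k \<in> desc (drop k w)" using d by (auto simp: desc_drop)
      then have "d - k \<in> psums v" using h by blast
      then have "d \<in> (+) (sum_list u) ` psums v" using 3 su by (metis image_eqI le_add_diff_inverse less_imp_le)
      then show ?thesis by (simp add: psums_append)
    qed
  qed
qed

lemma key:
  assumes kn: "sum_list u \<le> length w"
  shows "Fd w (u @ v) = Fd (take (sum_list u) w) u * Fd (drop (sum_list u) w) v"
proof -
  let ?k = "sum_list u"
  have lt: "length (take ?k w) = ?k" "length (drop ?k w) = length w - ?k" using kn by auto
  have "(composition (u @ v) \<and> sum_list (u @ v) = length w \<and> desc w \<subseteq> psums (u @ v)) \<longleftrightarrow>
      (composition u \<and> sum_list u = ?k \<and> desc (take ?k w) \<subseteq> psums u) \<and>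
      (composition v \<and> sum_list v = length w - ?k \<and> desc (drop ?k w) \<subseteq> psums v)"
  proof (cases "composition u \<and> composition v \<and> sum_list v = length w - ?k")
    case True
    then have "desc w \<subseteq> psums (u @ v) \<longleftrightarrow> desc (take ?k w) \<subseteq> psums u \<and> desc (drop ?k w) \<subseteq> psums v"
      using desc_part[of u v ?k w] kn by blast
    then show ?thesis using True kn by (auto simp: comp_append)
  next
    case False then show ?thesis using kn by (auto simp: comp_append)
  qed
  then show ?thesis unfolding Fd_def lt by auto
qed

lemma key0: "length w < sum_list u \<Longrightarrow> Fd w (u @ v) = 0"
  by (simp add: Fd_def)

lemma Fd_st[simp]: "Fd (st x) = Fd x" by (simp add: Fd_def fun_eq_iff)

lemma cut_sum: "Fd w (u @ v) = (\<Sum>i\<in>{0..length w}. Fd (st (take i w)) u * Fd (st (drop i w)) v)"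
proof -
  let ?k = "sum_list u"
  have "(\<Sum>i\<in>{0..length w}. Fd (st (take i w)) u * Fd (st (drop i w)) v)
      = (\<Sum>i\<in>{0..length w}. if i = ?k then Fd (take ?k w) u * Fd (drop ?k w) v else 0)"
  proof (rule sum.cong[OF refl])
    fix i assume "i \<in> {0..length w}"
    then have "length (take i w) = i" by simp
    then show "Fd (st (take i w)) u * Fd (st (drop i w)) v = (if i = ?k then Fd (take ?k w) u * Fd (drop ?k w) v else 0)"
      by (auto simp: Fd_def)
  qed
  also have "\<dots> = (if ?k \<le> length w then Fd (take ?k w) u * Fd (drop ?k w) v else 0)"
    by (simp add: sum.delta')
  also have "\<dots> = Fd w (u @ v)" using key key0 by (simp add: not_le)
  finally show ?thesis by simp
qed

lemma pi_coalg:
  assumes fx: "finite (supp x)"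
  shows "mu_Q (pi_map x) = tensor_map pi_map pi_map (mu_MPR x)"
proof (rule ext, clarify)
  fix u v
  have "mu_Q (pi_map x) (u, v) = pi_map x (u @ v)" using mu_Q_eval finite_supp_pi fx by blast
  also have "\<dots> = (\<Sum>w\<in>supp x. x w * Fd w (u @ v))" by (simp add: pi_eq lin_def)
  finally have L: "mu_Q (pi_map x) (u, v) = (\<Sum>w\<in>supp x. x w * Fd w (u @ v))" .
  let ?T = "\<Union>w\<in>supp x. supp (mu_MPR_basis w)"
  have fT: "finite ?T" using fx finite_supp_mu_basis by blast
  let ?t = "mu_MPR x"
  have st: "supp ?t \<subseteq> ?T" unfolding mu_MPR_def by (rule supp_lin)
  define G where "G ab = Fd (fst ab) u * Fd (snd ab) v" for ab :: "nat list \<times> nat list"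
  have "tensor_map pi_map pi_map ?t (u, v) = (\<Sum>ab\<in>supp ?t. ?t ab * G ab)"
    by (simp add: tensor_map_def pi_delta G_def mult.assoc)
  also have "\<dots> = (\<Sum>ab\<in>?T. ?t ab * G ab)" by (rule sum_supp[OF fT st])
  also have "\<dots> = (\<Sum>ab\<in>?T. (\<Sum>w\<in>supp x. x w * mu_MPR_basis w ab) * G ab)"
    by (simp add: mu_MPR_def lin_def)
  also have "\<dots> = (\<Sum>w\<in>supp x. x w * (\<Sum>ab\<in>?T. mu_MPR_basis w ab * G ab))"
    by (simp add: sum_distrib_left sum_distrib_right mult.assoc) (rule sum.swap)
  also have "\<dots> = (\<Sum>w\<in>supp x. x w * Fd w (u @ v))"
  proof (rule sum.cong[OF refl])
    fix w assume "w \<in> supp x"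
    then have "supp (mu_MPR_basis w) \<subseteq> ?T" by blast
    then show "x w * (\<Sum>ab\<in>?T. mu_MPR_basis w ab * G ab) = x w * Fd w (u @ v)"
      using mu_basis_sum[OF fT] cut_sum by (simp add: G_def)
  qed
  finally show "mu_Q (pi_map x) (u, v) = tensor_map pi_map pi_map ?t (u, v)" using L by simp
qed

lemma pi_counit: assumes "finite (supp x)" shows "counit (pi_map x) = counit x"
proof -
  have "counit (pi_map x) = (\<Sum>w\<in>supp x. x w * Fd w [])" by (simp add: counit_def pi_eq lin_def)
  also have "\<dots> = (\<Sum>w\<in>supp x. if w = [] then x w else 0)"
    by (rule sum.cong[OF refl]) (auto simp: Fd_def composition_def desc_def)
  also have "\<dots> = x []" using assms by (simp add: supp_def)
  finally show ?thesis by (simp add: counit_def)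
qed



lemma composition_Cons: "composition (x # r) \<longleftrightarrow> 0 < x \<and> composition r"
  by (simp add: composition_def)

lemma comp_sum0: "composition b \<Longrightarrow> sum_list b = 0 \<Longrightarrow> b = []"
  by (cases b) (auto simp: composition_def)

lemma psums_inj:
  "composition b \<Longrightarrow> composition c \<Longrightarrow> sum_list b = sum_list c \<Longrightarrow> psums b = psums c \<Longrightarrow> b = c"
proof (induction b arbitrary: c)
  case Nil
  then have "sum_list c = 0" "composition c" by simp_all
  then show ?case using comp_sum0[of c] by simp
next
  case (Cons x r)
  have x0: "0 < x" and cr: "composition r" using Cons.prems by (auto simp: composition_def)
  obtain y s where c: "c = y # s" using Cons.prems x0 by (cases c) auto
  have y0: "0 < y" and cs: "composition s" using Cons.prems c by (auto simp: composition_def)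
  show ?case
  proof (cases "r = []")
    case True
    then have "psums c = {}" using Cons.prems by (simp add: psums_Cons)
    then have "s = []" using c by (simp add: psums_Cons split: if_splits)
    then show ?thesis using True c Cons.prems by simp
  next
    case False
    then have "psums (x # r) \<noteq> {}" by (simp add: psums_Cons)
    then have "psums c \<noteq> {}" using Cons.prems by simp
    then have sne: "s \<noteq> []" using c by (auto simp: psums_Cons)
    have pb: "psums (x # r) = insert x ((+) x ` psums r)" using False by (simp add: psums_Cons)
    have pc: "psums c = insert y ((+) y ` psums s)" using sne c by (simp add: psums_Cons)
    have "x \<in> psums (x # r)" using pb by simp
    then have "x \<in> psums c" using Cons.prems(4) by simp
    then have "y \<le> x" using pc by auto
    moreover have "y \<in> psums c" using pc by simp
    then have "y \<in> psums (x # r)" using Cons.prems(4) by simp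
    then have "x \<le> y" using pb by auto
    ultimately have xy: "x = y" by simp
    have "x \<notin> (+) x ` psums r" using psums_bound[OF cr, of 0] by auto
    moreover have "y \<notin> (+) y ` psums s" using psums_bound[OF cs, of 0] by auto
    ultimately have "(+) x ` psums r = (+) x ` psums s" using pb pc xy Cons.prems
      by (metis Diff_insert_absorb)
    then have "psums r = psums s" by (simp add: inj_image_eq_iff)
    moreover have "sum_list r = sum_list s" using Cons.prems c xy by simp
    ultimately have "r = s" using Cons.IH cr cs by blast
    then show ?thesis using c xy by simp
  qed
qed

lemma pi_QSymm: "finite (supp x) \<Longrightarrow> pi_map x \<in> QSymm"
  unfolding QSymm_def using finite_supp_pi supp_lin[of Fd x] supp_Fd
  by (auto simp: pi_eq)

lemma lin_diff: assumes "finite (supp x)" "finite (supp y)"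
  shows "lin G (\<lambda>w. x w - y w) = (\<lambda>v. lin G x v - lin G y v)"
proof
  fix v
  let ?T = "supp x \<union> supp y"
  have f: "finite ?T" using assms by simp
  have "supp (\<lambda>w. x w - y w) \<subseteq> ?T" by (auto simp: supp_def)
  then show "lin G (\<lambda>w. x w - y w) v = lin G x v - lin G y v"
    using f by (simp add: lin_T[OF f] left_diff_distrib sum_subtractf)
qed

lemma pi_inj: "inj_on pi_map MPR_lsd"
proof (rule inj_onI)
  fix x y assume x: "x \<in> MPR_lsd" and y: "y \<in> MPR_lsd" and e: "pi_map x = pi_map y"
  define z where "z w = x w - y w" for w
  have fx: "finite (supp x)" and fy: "finite (supp y)" using x y by (auto simp: MPR_lsd_def)
  have "z = (\<lambda>w. x w - y w)" by (simp add: z_def fun_eq_iff)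
  then have pz: "pi_map z = (\<lambda>v. 0)" using lin_diff[OF fx fy, of Fd] e by (simp add: pi_eq)
  have sz: "supp z \<subseteq> supp x \<union> supp y" by (auto simp: supp_def z_def)
  have fz: "finite (supp z)" using sz fx fy finite_subset by blast
  have lz: "\<forall>w\<in>supp z. lsd w" using sz x y by (auto simp: MPR_lsd_def)
  have "supp z = {}"
  proof (rule ccontr)
    assume ne: "supp z \<noteq> {}"
    define m where "m = Min ((\<lambda>w. card (desc w)) ` supp z)"
    have "m \<in> (\<lambda>w. card (desc w)) ` supp z" unfolding m_def using fz ne by (intro Min_in) auto
    then obtain w where w: "w \<in> supp z" "card (desc w) = m" by auto
    have mle: "m \<le> card (desc w')" if "w' \<in> supp z" for w'
      unfolding m_def using fz that by (intro Min_le) auto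
    define c where "c = comp (length w) (desc w)"
    have cp: "sum_list c = length w" "composition c" "psums c = desc w"
      using comp_props[OF desc_sub[of w]] by (auto simp: c_def)
    have "pi_map z c = (\<Sum>w'\<in>supp z. z w' * Fd w' c)" by (simp add: pi_eq lin_def)
    also have "\<dots> = (\<Sum>w'\<in>supp z. if w' = w then z w' else 0)"
    proof (rule sum.cong[OF refl])
      fix w' assume w': "w' \<in> supp z"
      show "z w' * Fd w' c = (if w' = w then z w' else 0)"
      proof (cases "w' = w")
        case True then show ?thesis using cp by (simp add: Fd_def)
      next
        case False
        have "Fd w' c = 0"
        proof (rule ccontr)
          assume "Fd w' c \<noteq> 0"
          then have l: "length w' = length w" and s: "desc w' \<subseteq> desc w"
            using cp by (auto simp: Fd_def split: if_splits)
          have "finite (desc w)" using desc_sub finite_subset by blast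
          then have "card (desc w') \<le> card (desc w)" using card_mono s by blast
          then have "card (desc w') = card (desc w)" using mle[OF w'] w(2) by simp
          then have "desc w' = desc w" using card_subset_eq[OF \<open>finite (desc w)\<close> s] by simp
          then have "w' = w" using lsd_unique lz w' w(1) l by blast
          then show False using False by simp
        qed
        then show ?thesis using False by simp
      qed
    qed
    also have "\<dots> = z w" using fz w(1) by simp
    finally have "pi_map z c = z w" .
    then show False using pz w(1) by (simp add: supp_def)
  qed
  then have "\<forall>w. z w = 0" by (auto simp: supp_def)
  then show "x = y" by (auto simp: z_def fun_eq_iff)
qed

lemma supp_delta_comb: "supp (\<lambda>z. \<Sum>i\<in>I. c i * X i z) \<subseteq> (\<Union>i\<in>I. supp (X i))"
  by (rule supp_comb)

lemma delta_img: "composition c \<Longrightarrow> \<exists>y\<in>MPR_lsd. pi_map y = delta c"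
proof (induction "sum_list c - card (psums c)" arbitrary: c rule: less_induct)
  case less
  let ?n = "sum_list c"
  have Dsub: "psums c \<subseteq> {1..<?n}" using psums_bound[OF less.prems] by fastforce
  obtain w where w: "lsd w" "length w = ?n" "desc w = psums c" using lsd_exists[OF Dsub] by blast
  define R where "R = {b. composition b \<and> sum_list b = ?n \<and> psums c \<subseteq> psums b \<and> b \<noteq> c}"
  have finR: "finite R" unfolding R_def using finite_comps[of ?n] by (rule rev_finite_subset) auto
  have "\<forall>b\<in>R. \<exists>y\<in>MPR_lsd. pi_map y = delta b"
  proof
    fix b assume b: "b \<in> R"
    have "psums c \<noteq> psums b" using psums_inj[of b c] b less.prems by (auto simp: R_def)
    then have ps: "psums c \<subset> psums b" using b by (auto simp: R_def)
    have bsub: "psums b \<subseteq> {1..<?n}" using psums_bound[of b] b by (fastforce simp: R_def)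
    then have "finite (psums b)" using finite_subset by blast
    then have "card (psums c) < card (psums b)" using ps psubset_card_mono by blast
    moreover have "card (psums b) < ?n"
    proof -
      have "?n \<noteq> 0"
      proof
        assume n0: "?n = 0"
        have "composition b" "sum_list b = ?n" "b \<noteq> c" using b by (auto simp: R_def)
        then have "b = []" using comp_sum0[of b] n0 by simp
        moreover have "c = []" using comp_sum0[of c] n0 less.prems by simp
        ultimately show False using \<open>b \<noteq> c\<close> by simp
      qed
      moreover have "card (psums b) \<le> card {1..<?n}" using card_mono[OF _ bsub] by simp
      moreover have "card {1..<?n} = ?n - 1" by simp
      ultimately show ?thesis by linarith
    qed
    ultimately have "sum_list b - card (psums b) < ?n - card (psums c)" using b by (simp add: R_def)
    then show "\<exists>y\<in>MPR_lsd. pi_map y = delta b" using less.hyps b by (auto simp: R_def)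
  qed
  then obtain Y where Y: "\<forall>b\<in>R. Y b \<in> MPR_lsd \<and> pi_map (Y b) = delta b" by metis
  define S where "S z = (\<Sum>b\<in>R. (-1) * Y b z)" for z
  define y where "y z = delta w z + S z" for z
  have fY: "\<And>b. b \<in> R \<Longrightarrow> finite (supp (Y b))" using Y by (auto simp: MPR_lsd_def)
  have sS: "supp S \<subseteq> (\<Union>b\<in>R. supp (Y b))" unfolding S_def by (rule supp_comb)
  have fS: "finite (supp S)" using sS finR fY finite_subset by (metis (no_types, lifting) finite_UN_I)
  have piS: "pi_map S = (\<lambda>v. \<Sum>b\<in>R. (-1) * delta b v)"
    unfolding S_def pi_eq using lin_comb[OF finR fY, where c="\<lambda>_. -1" and G=Fd] Y by (simp add: pi_eq)
  have py: "pi_map y = (\<lambda>v. Fd w v + (\<Sum>b\<in>R. (-1) * delta b v))"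
    unfolding y_def using lin_add[OF _ fS, of "delta w" Fd] piS by (simp add: pi_eq lin_delta)
  have "pi_map y = delta c"
  proof
    fix v
    have "(\<Sum>b\<in>R. (-1) * delta b v) = - (\<Sum>b\<in>R. if v = b then 1 else 0)"
      by (simp add: delta_def sum_negf)
    also have "\<dots> = (if v \<in> R then -1 else 0)" using finR by simp
    finally have e: "(\<Sum>b\<in>R. (-1) * delta b v) = (if v \<in> R then -1 else 0)" .
    have "pi_map y v = Fd w v + (if v \<in> R then -1 else 0)" using py e by simp
    moreover have "Fd w v = (if v = c \<or> v \<in> R then 1 else 0)"
      using less.prems w unfolding Fd_def R_def by auto
    moreover have "c \<notin> R" by (simp add: R_def)
    ultimately show "pi_map y v = delta c v" by (auto simp: delta_def)
  qed
  moreover have "y \<in> MPR_lsd"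
  proof -
    have "supp y \<subseteq> {w} \<union> (\<Union>b\<in>R. supp (Y b))" using sS by (auto simp: supp_def y_def delta_def)
    moreover have "\<forall>b\<in>R. supp (Y b) \<subseteq> {w. lsd w}" using Y by (auto simp: MPR_lsd_def)
    ultimately show ?thesis using fS w(1) finR fY unfolding MPR_lsd_def
      by (auto intro: finite_subset)
  qed
  ultimately show ?case by blast
qed



lemma delta_Q: "composition a \<Longrightarrow> delta a \<in> QSymm" by (simp add: QSymm_def)

lemma delta_lsd: "lsd a \<Longrightarrow> delta a \<in> MPR_lsd" by (simp add: MPR_lsd_def)

lemma comb_lsd: assumes "finite I" "\<And>i. i \<in> I \<Longrightarrow> X i \<in> MPR_lsd"
  shows "(\<lambda>z. \<Sum>i\<in>I. c i * X i z) \<in> MPR_lsd"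
proof -
  have "supp (\<lambda>z. \<Sum>i\<in>I. c i * X i z) \<subseteq> (\<Union>i\<in>I. supp (X i))" by (rule supp_comb)
  moreover have "finite (\<Union>i\<in>I. supp (X i))" using assms by (auto simp: MPR_lsd_def)
  moreover have "(\<Union>i\<in>I. supp (X i)) \<subseteq> {w. lsd w}" using assms by (auto simp: MPR_lsd_def)
  ultimately show ?thesis unfolding MPR_lsd_def by (auto intro: finite_subset)
qed

lemma pi_comb: "finite I \<Longrightarrow> (\<And>i. i \<in> I \<Longrightarrow> finite (supp (X i))) \<Longrightarrow>
  pi_map (\<lambda>z. \<Sum>i\<in>I. c i * X i z) = (\<lambda>v. \<Sum>i\<in>I. c i * pi_map (X i) v)"
  unfolding pi_eq by (rule lin_comb)

lemma sum_delta_eval: "finite A \<Longrightarrow> supp f \<subseteq> A \<Longrightarrow> (\<Sum>a\<in>A. f a * delta a v) = f v"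
proof -
  assume fA: "finite A" and s: "supp f \<subseteq> A"
  have "(\<Sum>a\<in>A. f a * delta a v) = (\<Sum>a\<in>A. if v = a then f a else 0)"
    by (rule sum.cong) (auto simp: delta_def)
  also have "\<dots> = (if v \<in> A then f v else 0)" using fA by simp
  also have "\<dots> = f v" using s by (auto simp: supp_def)
  finally show ?thesis .
qed

lemma pi_surj: "pi_map ` MPR_lsd = QSymm"
proof
  show "pi_map ` MPR_lsd \<subseteq> QSymm" using pi_QSymm by (auto simp: MPR_lsd_def)
next
  show "QSymm \<subseteq> pi_map ` MPR_lsd"
  proof
    fix q assume q: "q \<in> QSymm"
    have fq: "finite (supp q)" and cq: "\<forall>c\<in>supp q. composition c" using q by (auto simp: QSymm_def)
    then have "\<forall>c\<in>supp q. \<exists>y\<in>MPR_lsd. pi_map y = delta c" using delta_img by blast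
    then obtain Y where Y: "\<forall>c\<in>supp q. Y c \<in> MPR_lsd \<and> pi_map (Y c) = delta c" by metis
    define y where "y = (\<lambda>z. \<Sum>c\<in>supp q. q c * Y c z)"
    have yl: "y \<in> MPR_lsd" unfolding y_def using comb_lsd[OF fq] Y by blast
    have fY: "\<And>c. c \<in> supp q \<Longrightarrow> finite (supp (Y c))" using Y by (auto simp: MPR_lsd_def)
    have "pi_map y = (\<lambda>v. \<Sum>c\<in>supp q. q c * pi_map (Y c) v)"
      unfolding y_def pi_eq by (rule lin_comb[OF fq fY])
    also have "\<dots> = (\<lambda>v. \<Sum>c\<in>supp q. q c * delta c v)" using Y by simp
    also have "\<dots> = q" using sum_delta_eval[OF fq] by auto
    finally show "q \<in> pi_map ` MPR_lsd" using yl by blast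
  qed
qed

lemma pi_bij: "bij_betw pi_map MPR_lsd QSymm"
  using pi_inj pi_surj by (simp add: bij_betw_def)

lemma mu_lsd: assumes x: "x \<in> MPR_lsd" and ne: "mu_MPR x (u, v) \<noteq> 0" shows "lsd u \<and> lsd v"
proof -
  have "(\<Sum>w\<in>supp x. x w * mu_MPR_basis w (u, v)) \<noteq> 0" using ne by (simp add: mu_MPR_def lin_def)
  then obtain w where w: "w \<in> supp x" "mu_MPR_basis w (u, v) \<noteq> 0"
    using sum.not_neutral_contains_not_neutral by force
  then have "{i \<in> {0..length w}. st (take i w) = u \<and> st (drop i w) = v} \<noteq> {}"
    by (auto simp: mu_MPR_basis_def)
  then obtain i where "u = st (take i w)" "v = st (drop i w)" by blast
  moreover have "lsd w" using w x by (auto simp: MPR_lsd_def)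
  ultimately show ?thesis using lsd_take lsd_drop by blast
qed

abbreviation psiQ where "psiQ \<equiv> the_inv_into MPR_lsd pi_map"

lemma psi_in: "q \<in> QSymm \<Longrightarrow> psiQ q \<in> MPR_lsd"
  using the_inv_into_into[OF pi_inj] pi_surj by blast

lemma pi_psi: "q \<in> QSymm \<Longrightarrow> pi_map (psiQ q) = q"
  using f_the_inv_into_f[OF pi_inj] pi_surj by blast

lemma psi_pi: "x \<in> MPR_lsd \<Longrightarrow> psiQ (pi_map x) = x"
  using the_inv_into_f_f[OF pi_inj] by blast

lemma fin_lsd: "x \<in> MPR_lsd \<Longrightarrow> finite (supp x)" by (simp add: MPR_lsd_def)

lemma psi_comb:
  assumes c: "lsd c" and fA: "finite A" and sA: "supp (Fd c) \<subseteq> A" and cA: "\<forall>a\<in>A. composition a"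
  shows "(\<lambda>z. \<Sum>a\<in>A. Fd c a * psiQ (delta a) z) = delta c"
proof -
  define y where "y = (\<lambda>z. \<Sum>a\<in>A. Fd c a * psiQ (delta a) z)"
  have inA: "\<And>a. a \<in> A \<Longrightarrow> psiQ (delta a) \<in> MPR_lsd" using cA delta_Q psi_in by blast
  have yl: "y \<in> MPR_lsd" unfolding y_def using comb_lsd[OF fA, of "\<lambda>a. psiQ (delta a)" "Fd c"] inA by blast
  have "pi_map y = (\<lambda>v. \<Sum>a\<in>A. Fd c a * pi_map (psiQ (delta a)) v)"
    unfolding y_def by (rule pi_comb[OF fA]) (use inA fin_lsd in blast)
  also have "\<dots> = (\<lambda>v. \<Sum>a\<in>A. Fd c a * delta a v)" using cA delta_Q pi_psi by simp
  also have "\<dots> = Fd c" using sum_delta_eval[OF fA sA] by auto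
  also have "\<dots> = pi_map (delta c)" by (simp add: pi_delta)
  finally have "pi_map y = pi_map (delta c)" .
  then have "y = delta c" using pi_inj yl delta_lsd[OF c] by (meson inj_onD)
  then show ?thesis by (simp add: y_def)
qed

lemma fin_supp_mu: "finite (supp x) \<Longrightarrow> finite (supp (mu_MPR x))"
  unfolding mu_MPR_def using finite_supp_lin finite_supp_mu_basis by blast

lemma psi_coalg: assumes q: "q \<in> QSymm" shows "mu_MPR (psiQ q) = tensor_map psiQ psiQ (mu_Q q)"
proof (rule ext, clarify)
  fix u v
  define x where "x = psiQ q"
  have xl: "x \<in> MPR_lsd" using psi_in[OF q] by (simp add: x_def)
  have fx: "finite (supp x)" using xl fin_lsd by blast
  define t where "t = mu_MPR x"
  have ft: "finite (supp t)" unfolding t_def using fin_supp_mu[OF fx] .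
  have tl: "\<And>cd. cd \<in> supp t \<Longrightarrow> lsd (fst cd) \<and> lsd (snd cd)"
    using mu_lsd[OF xl] by (auto simp: t_def supp_def)
  have qq: "mu_Q q = tensor_map pi_map pi_map t"
    using pi_coalg[OF fx] pi_psi[OF q] by (simp add: t_def x_def)
  define s where "s = tensor_map pi_map pi_map t"
  have s_eq: "s (a, b) = (\<Sum>cd\<in>supp t. t cd * Fd (fst cd) a * Fd (snd cd) b)" for a b
    by (simp add: s_def tensor_map_def pi_delta)
  define A where "A = (\<Union>cd\<in>supp t. supp (Fd (fst cd)))"
  define B where "B = (\<Union>cd\<in>supp t. supp (Fd (snd cd)))"
  have fA: "finite A" "finite B" using ft finite_supp_Fd by (auto simp: A_def B_def)
  have cA: "\<forall>a\<in>A. composition a" "\<forall>b\<in>B. composition b"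
    using supp_Fd by (fastforce simp: A_def B_def)+
  have sAB: "supp s \<subseteq> A \<times> B"
  proof
    fix ab assume "ab \<in> supp s"
    then obtain a b where ab: "ab = (a, b)" "s (a, b) \<noteq> 0" by (cases ab) (auto simp: supp_def)
    then have "(\<Sum>cd\<in>supp t. t cd * Fd (fst cd) a * Fd (snd cd) b) \<noteq> 0" using s_eq by simp
    then obtain cd where "cd \<in> supp t" "t cd * Fd (fst cd) a * Fd (snd cd) b \<noteq> 0"
      using sum.not_neutral_contains_not_neutral by blast
    then have "a \<in> supp (Fd (fst cd))" "b \<in> supp (Fd (snd cd))" by (auto simp: supp_def)
    then show "ab \<in> A \<times> B" using ab \<open>cd \<in> supp t\<close> unfolding A_def B_def by blast
  qed
  define P where "P a = psiQ (delta a) u" for a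
  define Q where "Q b = psiQ (delta b) v" for b
  have "tensor_map psiQ psiQ s (u, v) = (\<Sum>ab\<in>supp s. s ab * (P (fst ab) * Q (snd ab)))"
    by (simp add: tensor_map_def P_def Q_def mult.assoc)
  also have "\<dots> = (\<Sum>ab\<in>A \<times> B. s ab * (P (fst ab) * Q (snd ab)))"
    using sum_supp[OF _ sAB] fA by simp
  also have "\<dots> = (\<Sum>a\<in>A. \<Sum>b\<in>B. s (a, b) * (P a * Q b))"
    by (simp add: sum.cartesian_product split_beta)
  also have "\<dots> = (\<Sum>a\<in>A. \<Sum>b\<in>B. \<Sum>cd\<in>supp t. t cd * Fd (fst cd) a * Fd (snd cd) b * (P a * Q b))"
    by (simp add: s_eq sum_distrib_right)
  also have "\<dots> = (\<Sum>a\<in>A. \<Sum>cd\<in>supp t. \<Sum>b\<in>B. t cd * Fd (fst cd) a * Fd (snd cd) b * (P a * Q b))"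
    by (rule sum.cong[OF refl]) (rule sum.swap)
  also have "\<dots> = (\<Sum>cd\<in>supp t. \<Sum>a\<in>A. \<Sum>b\<in>B. t cd * Fd (fst cd) a * Fd (snd cd) b * (P a * Q b))"
    by (rule sum.swap)
  also have "\<dots> = (\<Sum>cd\<in>supp t. t cd * (\<Sum>a\<in>A. Fd (fst cd) a * P a) * (\<Sum>b\<in>B. Fd (snd cd) b * Q b))"
    by (rule sum.cong[OF refl]) (simp add: sum_distrib_left sum_distrib_right mult_ac)
  also have "\<dots> = (\<Sum>cd\<in>supp t. t cd * delta (fst cd) u * delta (snd cd) v)"
  proof (rule sum.cong[OF refl])
    fix cd assume cd: "cd \<in> supp t"
    have sa: "supp (Fd (fst cd)) \<subseteq> A" "supp (Fd (snd cd)) \<subseteq> B" using cd by (auto simp: A_def B_def)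
    have "(\<Sum>a\<in>A. Fd (fst cd) a * P a) = delta (fst cd) u"
      using fun_cong[OF psi_comb[OF conjunct1[OF tl[OF cd]] fA(1) sa(1) cA(1)], of u] by (simp add: P_def)
    moreover have "(\<Sum>b\<in>B. Fd (snd cd) b * Q b) = delta (snd cd) v"
      using fun_cong[OF psi_comb[OF conjunct2[OF tl[OF cd]] fA(2) sa(2) cA(2)], of v] by (simp add: Q_def)
    ultimately show "t cd * (\<Sum>a\<in>A. Fd (fst cd) a * P a) * (\<Sum>b\<in>B. Fd (snd cd) b * Q b)
        = t cd * delta (fst cd) u * delta (snd cd) v" by simp
  qed
  also have "\<dots> = (\<Sum>cd\<in>supp t. if cd = (u, v) then t cd else 0)"
    by (rule sum.cong[OF refl]) (auto simp: delta_def)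
  also have "\<dots> = t (u, v)" using ft by (simp add: supp_def)
  finally show "mu_MPR (psiQ q) (u, v) = tensor_map psiQ psiQ (mu_Q q) (u, v)"
    using qq by (simp add: s_def t_def x_def)
qed



lemma pi_add: "finite (supp x) \<Longrightarrow> finite (supp y) \<Longrightarrow> pi_map (\<lambda>w. x w + y w) = (\<lambda>w. pi_map x w + pi_map y w)"
  unfolding pi_eq by (rule lin_add)

lemma add_lsd: assumes "x \<in> MPR_lsd" "y \<in> MPR_lsd" shows "(\<lambda>w. x w + y w) \<in> MPR_lsd"
proof -
  have "supp (\<lambda>w. x w + y w) \<subseteq> supp x \<union> supp y" by (auto simp: supp_def)
  then show ?thesis using assms unfolding MPR_lsd_def by (auto intro: finite_subset)
qed

theorem theorem14p4:
  shows "MPR_lsd \<subseteq> MPR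
    \<and> (\<forall>x\<in>MPR_lsd. \<forall>u v. mu_MPR x (u, v) \<noteq> 0 \<longrightarrow> lsd u \<and> lsd v)
    \<and> bij_betw pi_map MPR_lsd QSymm
    \<and> coalg_morphism MPR_lsd mu_MPR mu_Q pi_map
    \<and> (let psi = the_inv_into MPR_lsd pi_map in
         (\<forall>q\<in>QSymm. psi q \<in> MPR_lsd \<and> pi_map (psi q) = q)
         \<and> coalg_morphism QSymm mu_Q mu_MPR psi)"
proof -
  have 1: "MPR_lsd \<subseteq> MPR" by (auto simp: MPR_lsd_def MPR_def lsd_def)
  have 2: "\<forall>x\<in>MPR_lsd. \<forall>u v. mu_MPR x (u, v) \<noteq> 0 \<longrightarrow> lsd u \<and> lsd v" using mu_lsd by blast
  have 4: "coalg_morphism MPR_lsd mu_MPR mu_Q pi_map"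
    unfolding coalg_morphism_def
  proof (intro conjI ballI)
    fix x y assume "x \<in> MPR_lsd" "y \<in> MPR_lsd"
    then show "pi_map (\<lambda>w. x w + y w) = (\<lambda>w. pi_map x w + pi_map y w)" using pi_add fin_lsd by blast
  next
    fix x assume "x \<in> MPR_lsd"
    then show "mu_Q (pi_map x) = tensor_map pi_map pi_map (mu_MPR x)" using pi_coalg fin_lsd by blast
  next
    fix x assume "x \<in> MPR_lsd"
    then show "counit (pi_map x) = counit x" using pi_counit fin_lsd by blast
  qed
  have 5: "\<forall>q\<in>QSymm. psiQ q \<in> MPR_lsd \<and> pi_map (psiQ q) = q" using psi_in pi_psi by blast
  have fq: "finite (supp q)" if "q \<in> QSymm" for q using that by (simp add: QSymm_def)
  have add: "psiQ (\<lambda>w. x w + y w) = (\<lambda>w. psiQ x w + psiQ y w)" if "x \<in> QSymm" "y \<in> QSymm" for x y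
  proof -
    have m: "(\<lambda>w. psiQ x w + psiQ y w) \<in> MPR_lsd"
      by (rule add_lsd[OF psi_in[OF that(1)] psi_in[OF that(2)]])
    have "pi_map (\<lambda>w. psiQ x w + psiQ y w) = (\<lambda>w. x w + y w)"
      using pi_add[OF fin_lsd[OF psi_in[OF that(1)]] fin_lsd[OF psi_in[OF that(2)]]] pi_psi that by simp
    then show ?thesis using the_inv_into_f_eq[OF pi_inj _ m] by blast
  qed
  have cou: "counit (psiQ q) = counit q" if "q \<in> QSymm" for q
    using pi_counit[OF fin_lsd[OF psi_in[OF that]]] pi_psi[OF that] by simp
  have 6: "coalg_morphism QSymm mu_Q mu_MPR psiQ"
    unfolding coalg_morphism_def
  proof (intro conjI ballI)
    fix x y assume "x \<in> QSymm" "y \<in> QSymm"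
    then show "psiQ (\<lambda>w. x w + y w) = (\<lambda>w. psiQ x w + psiQ y w)" by (rule add)
  next
    fix x assume "x \<in> QSymm"
    then show "mu_MPR (psiQ x) = tensor_map psiQ psiQ (mu_Q x)" by (rule psi_coalg)
  next
    fix x assume "x \<in> QSymm"
    then show "counit (psiQ x) = counit x" by (rule cou)
  qed
  show ?thesis using 1 2 pi_bij 4 5 6 by (simp add: Let_def)
qed


end
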